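(* Let $n\ge0$ be an integer, $\omega\in\mathbb{R}$ and $\theta_0\in\mathbb{T}$, and write $\theta_j=\theta_0+j\omega$. Suppose that for each $0\le k\le n$ we are given $\Sigma_k\subset\mathbb{T}$ such that $(\Sigma_k,\theta_0)$ is an $(r_k,l_k,a_k)$-system. Then for every integer $t>0$, $$\frac{|\{0\le j<t:\theta_j\in\bigcup_{k=0}^n\Sigma_k\}|}{t}\le\sum_{k=0}^n\Big(\frac{l_k}{t}+\frac{l_k}{r_k+l_k}\Big)$$ and $$\frac{|\{0\le j<t:\theta_j\in\bigcup_{k=0}^n\Sigma_k\}|}{t}\le\sum_{k=0}^n\frac{l_k}{m_k+l_k},\qquad m_k=\min\{a_k,r_k\}.$$
   Context: Fix $\Sigma\subset\mathbb{T}$ and the orbit $\theta_j=\theta_0+j\omega$, $j\in\mathbb{Z}$. The set $\Sigma$ has minimal return time $r>0$ if whenever an orbit leaves $\Sigma$ it does not return for at least $r$ iterates, i.e. every maximal block of consecutive iterates outside $\Sigma$ lying between two visits to $\Sigma$ has length at least $r$. It has maximal confinement time $l>0$ if every block of consecutive iterates $\theta_i,\theta_{i+1},\dots$ all lying in $\Sigma$ has length at most $l$. The point $\theta_0$ has accumulation time $a\ge0$ with respect to $\Sigma$ if $\theta_i\notin\Sigma$ for all $0\le i<a$. If these hold, $(\Sigma,\theta_0)$ is called an $(r,l,a)$-system. *)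

theory Defs
  imports Complex_Main
begin

text \<open>The circle T = R/Z is represented by its fundamental domain [0,1);
  subsets of T are real sets contained in [0,1), and the point theta_0 + j*omega
  of T is represented by frac(theta_0 + j*omega).\<close>

definition orbit :: "real \<Rightarrow> real \<Rightarrow> int \<Rightarrow> real" where
  "orbit \<theta>0 \<omega> j = frac (\<theta>0 + of_int j * \<omega>)"

definition min_return_time :: "real set \<Rightarrow> real \<Rightarrow> real \<Rightarrow> nat \<Rightarrow> bool" where
  "min_return_time \<Sigma> \<theta>0 \<omega> r \<longleftrightarrow> 0 < r \<and>
     (\<forall>i k. i + 1 < k \<and> orbit \<theta>0 \<omega> i \<in> \<Sigma> \<and> orbit \<theta>0 \<omega> k \<in> \<Sigma> \<and>
        (\<forall>m. i < m \<and> m < k \<longrightarrow> orbit \<theta>0 \<omega> m \<notin> \<Sigma>)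
        \<longrightarrow> int r \<le> k - i - 1)"

definition max_confinement_time :: "real set \<Rightarrow> real \<Rightarrow> real \<Rightarrow> nat \<Rightarrow> bool" where
  "max_confinement_time \<Sigma> \<theta>0 \<omega> l \<longleftrightarrow> 0 < l \<and>
     (\<forall>i (L::nat). (\<forall>m<L. orbit \<theta>0 \<omega> (i + int m) \<in> \<Sigma>) \<longrightarrow> L \<le> l)"

definition accumulation_time :: "real set \<Rightarrow> real \<Rightarrow> real \<Rightarrow> nat \<Rightarrow> bool" where
  "accumulation_time \<Sigma> \<theta>0 \<omega> a \<longleftrightarrow> (\<forall>i::nat. i < a \<longrightarrow> orbit \<theta>0 \<omega> (int i) \<notin> \<Sigma>)"

definition rla_system :: "real set \<Rightarrow> real \<Rightarrow> real \<Rightarrow> nat \<Rightarrow> nat \<Rightarrow> nat \<Rightarrow> bool" where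
  "rla_system \<Sigma> \<theta>0 \<omega> r l a \<longleftrightarrow>
     min_return_time \<Sigma> \<theta>0 \<omega> r \<and> max_confinement_time \<Sigma> \<theta>0 \<omega> l \<and>
     accumulation_time \<Sigma> \<theta>0 \<omega> a"

end

theory Submission
  imports Defs
begin

lemma window:
  fixes V :: "nat set" and l r g s :: nat
  assumes P1: "\<And>i L. (\<forall>m<L. i+m \<in> V) \<Longrightarrow> L \<le> l"
  and P2: "\<And>i k. i+1<k \<Longrightarrow> i\<in>V \<Longrightarrow> k\<in>V \<Longrightarrow> (\<forall>m. i<m \<and> m<k \<longrightarrow> m\<notin>V) \<Longrightarrow> r \<le> k-i-1"
  and gr: "g \<le> r"
  shows "card (V \<inter> {s..<s+l+g}) \<le> l"
proof (cases "V \<inter> {s..<s+l+g} = {}")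
  case True then show ?thesis by simp
next
  case False
  define W where "W = V \<inter> {s..<s+l+g}"
  have fW: "finite W" by (simp add: W_def)
  define x where "x = Min W"
  have xW: "x \<in> W" using False fW Min_in unfolding x_def W_def by blast
  have xmin: "\<And>w. w \<in> W \<Longrightarrow> x \<le> w" using fW by (simp add: x_def)
  have ex: "\<exists>d. x + d \<notin> V"
  proof (rule ccontr)
    assume "\<not> ?thesis" then have "\<forall>m<Suc l. x+m \<in> V" by auto
    from P1[OF this] show False by simp
  qed
  define d where "d = (LEAST d. x + d \<notin> V)"
  have dV: "x + d \<notin> V" using LeastI_ex[OF ex] by (simp add: d_def)
  have belowd: "\<And>m. m < d \<Longrightarrow> x + m \<in> V" using not_less_Least d_def by blast
  have dl: "d \<le> l" using P1[of d x] belowd by blast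
  have d0: "d > 0" using xW dV W_def by (cases d) auto
  show ?thesis
  proof (cases "\<exists>z\<in>W. z \<ge> x + d")
    case True
    define Z where "Z = {z\<in>W. z \<ge> x+d}"
    have fZ: "finite Z" "Z \<noteq> {}" using fW True by (auto simp: Z_def)
    define z where "z = Min Z"
    have zZ: "z \<in> Z" using fZ Min_in z_def by blast
    have zmin: "\<And>w. w\<in>Z \<Longrightarrow> z \<le> w" using fZ z_def by simp
    have zgt: "z > x + d" using zZ dV by (auto simp: Z_def W_def le_less)
    have gap: "r \<le> z - (x+d-1) - 1"
    proof (rule P2)
      show "x+d-1+1 < z" using zgt d0 by simp
      show "x+d-1 \<in> V" using belowd[of "d-1"] d0 by simp
      show "z \<in> V" using zZ by (simp add: Z_def W_def)
      show "\<forall>m. x+d-1 < m \<and> m < z \<longrightarrow> m \<notin> V"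
      proof (intro allI impI)
        fix m assume m: "x+d-1 < m \<and> m < z"
        show "m \<notin> V"
        proof
          assume "m \<in> V"
          moreover have "s \<le> m" using xW m W_def by auto
          moreover have "m < s+l+g" using zZ m by (auto simp: Z_def W_def)
          ultimately have "m \<in> Z" using m d0 by (auto simp: Z_def W_def)
          then show False using zmin m by fastforce
        qed
      qed
    qed
    have sub: "W \<subseteq> {x..<x+d} \<union> {z..<s+l+g}"
    proof
      fix w assume w: "w \<in> W"
      show "w \<in> {x..<x+d} \<union> {z..<s+l+g}"
      proof (cases "w < x + d")
        case True then show ?thesis using xmin[OF w] by auto
      next
        case False
        then have "w \<in> Z" using w by (auto simp: Z_def)
        then show ?thesis using zmin w by (auto simp: W_def)
      qed
    qed
    have "card W \<le> card ({x..<x+d} \<union> {z..<s+l+g})" using card_mono[OF _ sub] by simp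
    also have "\<dots> \<le> card {x..<x+d} + card {z..<s+l+g}" by (rule card_Un_le)
    also have "\<dots> = d + (s+l+g-z)" by simp
    also have "\<dots> \<le> l"
    proof -
      have "x+d+g \<le> z" using gap zgt gr by arith
      moreover have "s \<le> x" using xW by (simp add: W_def)
      ultimately show ?thesis using dl by (cases "s+l+g \<le> z") simp_all
    qed
    finally show ?thesis by (simp add: W_def)
  next
    case False
    have sub: "W \<subseteq> {x..<x+d}" using False xmin by force
    have "card W \<le> d" using card_mono[OF _ sub] by simp
    then show ?thesis using dl by (simp add: W_def)
  qed
qed

lemma windows:
  fixes V :: "nat set" and l r g :: nat
  assumes P1: "\<And>i L. (\<forall>m<L. i+m \<in> V) \<Longrightarrow> L \<le> l"
  and P2: "\<And>i k. i+1<k \<Longrightarrow> i\<in>V \<Longrightarrow> k\<in>V \<Longrightarrow> (\<forall>m. i<m \<and> m<k \<longrightarrow> m\<notin>V) \<Longrightarrow> r \<le> k-i-1"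
  and gr: "g \<le> r"
  shows "card (V \<inter> {s..<s+q*(l+g)}) \<le> q*l"
proof (induction q)
  case 0 then show ?case by simp
next
  case (Suc q)
  have eq: "{s..<s+Suc q*(l+g)} = {s..<s+q*(l+g)} \<union> {s+q*(l+g)..<s+q*(l+g)+l+g}" by auto
  have "card (V \<inter> {s..<s+Suc q*(l+g)}) \<le> card (V \<inter> {s..<s+q*(l+g)}) + card (V \<inter> {s+q*(l+g)..<s+q*(l+g)+l+g})"
    unfolding eq Int_Un_distrib by (rule card_Un_le)
  also have "\<dots> \<le> q*l + l"
  proof -
    have "card (V \<inter> {s+q*(l+g)..<s+q*(l+g)+l+g}) \<le> l" using P1 P2 gr by (rule window)
    then show ?thesis using Suc by linarith
  qed
  finally show ?case by simp
qed

lemma bound1: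
  fixes V :: "nat set" and l r :: nat
  assumes P1: "\<And>i L. (\<forall>m<L. i+m \<in> V) \<Longrightarrow> L \<le> l"
  and P2: "\<And>i k. i+1<k \<Longrightarrow> i\<in>V \<Longrightarrow> k\<in>V \<Longrightarrow> (\<forall>m. i<m \<and> m<k \<longrightarrow> m\<notin>V) \<Longrightarrow> r \<le> k-i-1"
  and l0: "0 < l"
  shows "(l+r) * card (V \<inter> {0..<t}) \<le> l*t + l*(l+r)"
proof -
  define q where "q = t div (l+r)"
  have qt: "q*(l+r) \<le> t" using div_times_less_eq_dividend[of t "l+r"] by (simp add: q_def)
  have lt: "t < q*(l+r) + l + r"
  proof (cases "l + r = 0")
    case True then show ?thesis using l0 by simp
  next
    case False
    then show ?thesis unfolding q_def
      by (metis add.assoc add_less_cancel_left div_mult_mod_eq mod_less_divisor not_gr_zero)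
  qed
  have sub: "V \<inter> {0..<t} \<subseteq> (V \<inter> {0..<0+q*(l+r)}) \<union> (V \<inter> {q*(l+r)..<q*(l+r)+l+r})"
    using lt by auto
  have "card (V \<inter> {0..<t}) \<le> card ((V \<inter> {0..<0+q*(l+r)}) \<union> (V \<inter> {q*(l+r)..<q*(l+r)+l+r}))"
    by (rule card_mono[OF _ sub]) simp
  also have "\<dots> \<le> card (V \<inter> {0..<0+q*(l+r)}) + card (V \<inter> {q*(l+r)..<q*(l+r)+l+r})"
    by (rule card_Un_le)
  also have "\<dots> \<le> q*l + l"
  proof -
    have "card (V \<inter> {q*(l+r)..<q*(l+r)+l+r}) \<le> l" using P1 P2 order.refl by (rule window)
    moreover have "card (V \<inter> {0..<0+q*(l+r)}) \<le> q*l" using P1 P2 order.refl by (rule windows)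
    ultimately show ?thesis by linarith
  qed
  finally have c: "card (V \<inter> {0..<t}) \<le> q*l + l" .
  have "(l+r) * card (V \<inter> {0..<t}) \<le> (l+r)*(q*l+l)" using c by simp
  also have "\<dots> = l*(q*(l+r)) + l*(l+r)" by (simp add: algebra_simps)
  also have "\<dots> \<le> l*t + l*(l+r)" using qt by simp
  finally show ?thesis .
qed

lemma bound2:
  fixes V :: "nat set" and l r m :: nat
  assumes P1: "\<And>i L. (\<forall>m<L. i+m \<in> V) \<Longrightarrow> L \<le> l"
  and P2: "\<And>i k. i+1<k \<Longrightarrow> i\<in>V \<Longrightarrow> k\<in>V \<Longrightarrow> (\<forall>m. i<m \<and> m<k \<longrightarrow> m\<notin>V) \<Longrightarrow> r \<le> k-i-1"
  and mr: "m \<le> r" and l0: "0 < l"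
  and acc: "\<And>j. j < m \<Longrightarrow> j \<notin> V"
  shows "(l+m) * card (V \<inter> {0..<t}) \<le> l*t"
proof -
  define q where "q = t div (l+m)"
  define e where "e = t mod (l+m)"
  have te: "t = e + q*(l+m)" using mod_div_mult_eq[of t "l+m"] by (simp add: q_def e_def)
  have el: "e < l + m" using l0 by (simp add: e_def)
  have sub: "V \<inter> {0..<t} \<subseteq> (V \<inter> {0..<e}) \<union> (V \<inter> {e..<e+q*(l+m)})"
    using te by auto
  have "card (V \<inter> {0..<t}) \<le> card ((V \<inter> {0..<e}) \<union> (V \<inter> {e..<e+q*(l+m)}))"
    by (rule card_mono[OF _ sub]) simp
  also have "\<dots> \<le> card (V \<inter> {0..<e}) + card (V \<inter> {e..<e+q*(l+m)})"
    by (rule card_Un_le)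
  moreover have "card (V \<inter> {e..<e+q*(l+m)}) \<le> q*l" using P1 P2 mr by (rule windows)
  ultimately have c1: "card (V \<inter> {0..<t}) \<le> card (V \<inter> {0..<e}) + q*l"
    by linarith
  have c2: "(l+m) * card (V \<inter> {0..<e}) \<le> l * e"
  proof (cases "e \<le> m")
    case True
    then have "V \<inter> {0..<e} = {}" using acc by auto
    then show ?thesis by simp
  next
    case False
    then obtain f where f: "e = m + f" by (metis le_add_diff_inverse nat_le_linear)
    have fl: "f \<le> l" using f el by simp
    have "V \<inter> {0..<e} \<subseteq> {m..<e}"
    proof
      fix x assume x: "x \<in> V \<inter> {0..<e}"
      then have "\<not> x < m" using acc by blast
      then show "x \<in> {m..<e}" using x by simp
    qed
    then have "card (V \<inter> {0..<e}) \<le> f" using card_mono[of "{m..<e}"] f by fastforce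
    then have "(l+m) * card (V \<inter> {0..<e}) \<le> (l+m)*f" by simp
    also have "\<dots> = l*f + m*f" by (simp add: algebra_simps)
    also have "\<dots> \<le> l*f + m*l" using fl by simp
    also have "\<dots> = l*e" by (simp add: f algebra_simps)
    finally show ?thesis .
  qed
  have "(l+m) * card (V \<inter> {0..<t}) \<le> (l+m) * card (V \<inter> {0..<e}) + (l+m)*(q*l)"
    using c1 by (metis add_mult_distrib2 mult_le_mono2)
  also have "\<dots> \<le> l*e + l*(q*(l+m))" using c2 by (simp add: algebra_simps)
  also have "\<dots> = l*t" by (simp add: te algebra_simps)
  finally show ?thesis .
qed


theorem lemmaB1:
  fixes n :: nat and \<omega> \<theta>0 :: real and \<Sigma> :: "nat \<Rightarrow> real set"
    and r l a :: "nat \<Rightarrow> nat" and t :: nat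
  assumes "\<theta>0 \<in> {0..<1}"
    and "\<And>k. k \<le> n \<Longrightarrow> \<Sigma> k \<subseteq> {0..<1}"
    and "\<And>k. k \<le> n \<Longrightarrow> rla_system (\<Sigma> k) \<theta>0 \<omega> (r k) (l k) (a k)"
    and "0 < t"
  shows "real (card {j \<in> {0..<t}. orbit \<theta>0 \<omega> (int j) \<in> (\<Union>k\<in>{0..n}. \<Sigma> k)}) / real t
           \<le> (\<Sum>k=0..n. real (l k) / real t + real (l k) / (real (r k) + real (l k)))
       \<and> real (card {j \<in> {0..<t}. orbit \<theta>0 \<omega> (int j) \<in> (\<Union>k\<in>{0..n}. \<Sigma> k)}) / real t
           \<le> (\<Sum>k=0..n. real (l k) / (real (min (a k) (r k)) + real (l k)))"
proof -
  define V where "V k = {j::nat. orbit \<theta>0 \<omega> (int j) \<in> \<Sigma> k}" for k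
  define c where "c k = card (V k \<inter> {0..<t})" for k
  have tpos: "real t > 0" using assms(4) by simp
  have facts: "real (c k) / real t \<le> real (l k) / real t + real (l k) / (real (r k) + real (l k))
     \<and> real (c k) / real t \<le> real (l k) / (real (min (a k) (r k)) + real (l k))" if kn: "k \<le> n" for k
  proof -
    have sys: "min_return_time (\<Sigma> k) \<theta>0 \<omega> (r k)" "max_confinement_time (\<Sigma> k) \<theta>0 \<omega> (l k)"
      "accumulation_time (\<Sigma> k) \<theta>0 \<omega> (a k)"
      using assms(3)[OF kn] by (auto simp: rla_system_def)
    have l0: "0 < l k" "0 < r k" using sys by (auto simp: min_return_time_def max_confinement_time_def)
    have P1: "L \<le> l k" if h: "\<forall>m<L. i+m \<in> V k" for i L
    proof -
      have "\<forall>m<L. orbit \<theta>0 \<omega> (int i + int m) \<in> \<Sigma> k" using h by (simp add: V_def)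
      then show ?thesis using sys(2) unfolding max_confinement_time_def by blast
    qed
    have P2: "r k \<le> k' - i - 1" if h: "i+1<k'" "i \<in> V k" "k' \<in> V k" "\<forall>m. i<m \<and> m<k' \<longrightarrow> m \<notin> V k" for i k'
    proof -
      have "\<forall>m::int. int i < m \<and> m < int k' \<longrightarrow> orbit \<theta>0 \<omega> m \<notin> \<Sigma> k"
      proof (intro allI impI)
        fix m :: int assume m: "int i < m \<and> m < int k'"
        then have "i < nat m \<and> nat m < k'" by linarith
        then have "nat m \<notin> V k" using h(4) by blast
        moreover have "int (nat m) = m" using m by simp
        ultimately show "orbit \<theta>0 \<omega> m \<notin> \<Sigma> k" by (simp add: V_def)
      qed
      moreover have "int i + 1 < int k'" using h(1) by simp
      ultimately have "int (r k) \<le> int k' - int i - 1"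
        using sys(1) h(2,3) unfolding min_return_time_def V_def by blast
      then show ?thesis using h(1) by linarith
    qed
    have acc: "j \<notin> V k" if "j < min (a k) (r k)" for j
      using sys(3) that by (simp add: accumulation_time_def V_def)
    have b1: "(l k + r k) * c k \<le> l k * t + l k * (l k + r k)"
      unfolding c_def by (rule bound1) (use P1 P2 l0 in auto)
    have b2: "(l k + min (a k) (r k)) * c k \<le> l k * t"
      unfolding c_def by (rule bound2[where r="r k"]) (use P1 P2 l0 acc in auto)
    have r1: "real (c k) * (real (r k) + real (l k)) \<le> real (l k) * real t + real (l k) * (real (r k) + real (l k))"
    proof -
      have "real ((l k + r k) * c k) \<le> real (l k * t + l k * (l k + r k))" using b1 by linarith
      then show ?thesis by (simp add: algebra_simps)
    qed
    have r2: "real (c k) * (real (min (a k) (r k)) + real (l k)) \<le> real (l k) * real t"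
    proof -
      have "real ((l k + min (a k) (r k)) * c k) \<le> real (l k * t)" using b2 by linarith
      then show ?thesis by (simp add: algebra_simps)
    qed
    have rl: "real (r k) + real (l k) > 0" "real (min (a k) (r k)) + real (l k) > 0" using l0 by auto
    define D where "D = real (r k) + real (l k)"
    define E where "E = real (min (a k) (r k)) + real (l k)"
    have D0: "D > 0" and E0: "E > 0" using rl by (auto simp: D_def E_def)
    have e1: "real (c k) / real t = real (c k) * D / (real t * D)" using D0 by simp
    have e2: "real (l k) / real t + real (l k) / D = (real (l k) * D + real (l k) * real t) / (real t * D)"
      using D0 tpos by (simp add: add_frac_eq)
    have i1: "real (c k) * D / (real t * D) \<le> (real (l k) * D + real (l k) * real t) / (real t * D)"
      by (rule divide_right_mono) (use r1 D0 tpos in \<open>simp_all add: D_def algebra_simps\<close>)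
    have e3: "real (c k) / real t = real (c k) * E / (real t * E)" using E0 by simp
    have e4: "real (l k) / E = (real (l k) * real t) / (real t * E)" using tpos by simp
    have i2: "real (c k) * E / (real t * E) \<le> (real (l k) * real t) / (real t * E)"
      by (rule divide_right_mono) (use r2 E0 tpos in \<open>simp_all add: E_def algebra_simps\<close>)
    show ?thesis using e1 e2 i1 e3 e4 i2 unfolding D_def E_def by simp
  qed
  have seteq: "{j \<in> {0..<t}. orbit \<theta>0 \<omega> (int j) \<in> (\<Union>k\<in>{0..n}. \<Sigma> k)} = (\<Union>k\<in>{0..n}. V k \<inter> {0..<t})"
    by (auto simp: V_def)
  have "card {j \<in> {0..<t}. orbit \<theta>0 \<omega> (int j) \<in> (\<Union>k\<in>{0..n}. \<Sigma> k)} \<le> (\<Sum>k=0..n. c k)"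
    unfolding seteq c_def by (rule card_UN_le) simp
  then have N: "real (card {j \<in> {0..<t}. orbit \<theta>0 \<omega> (int j) \<in> (\<Union>k\<in>{0..n}. \<Sigma> k)}) / real t
      \<le> (\<Sum>k=0..n. real (c k) / real t)"
    using tpos by (simp add: sum_divide_distrib[symmetric] divide_right_mono of_nat_sum[symmetric] del: of_nat_sum)
  show ?thesis
  proof
    show "real (card {j \<in> {0..<t}. orbit \<theta>0 \<omega> (int j) \<in> (\<Union>k\<in>{0..n}. \<Sigma> k)}) / real t
           \<le> (\<Sum>k=0..n. real (l k) / real t + real (l k) / (real (r k) + real (l k)))"
      using N sum_mono[of "{0..n}" "\<lambda>k. real (c k) / real t" "\<lambda>k. real (l k) / real t + real (l k) / (real (r k) + real (l k))"] facts
      by (meson atLeastAtMost_iff order_trans)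
    show "real (card {j \<in> {0..<t}. orbit \<theta>0 \<omega> (int j) \<in> (\<Union>k\<in>{0..n}. \<Sigma> k)}) / real t
           \<le> (\<Sum>k=0..n. real (l k) / (real (min (a k) (r k)) + real (l k)))"
      using N sum_mono[of "{0..n}" "\<lambda>k. real (c k) / real t" "\<lambda>k. real (l k) / (real (min (a k) (r k)) + real (l k))"] facts
      by (meson atLeastAtMost_iff order_trans)
  qed
qed

end
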